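(* Consider the semi-discrete scheme $$\frac{du_i}{dt}=\frac{1}{\Delta x}\big(F_{i-1/2}-F_{i+1/2}\big)+\bar u_{i-1/2},\qquad \bar u_{i+1/2}=\frac{u_i+u_{i+1}}2,$$ $$F_{i+1/2}=\begin{cases}u_i^2/2 & \text{if }\bar u_{i+1/2}>0,\\ 0&\text{if }\bar u_{i+1/2}=0,\\ u_{i+1}^2/2&\text{if }\bar u_{i+1/2}<0,\end{cases}$$ for the equation $u_t+(u^2/2)_x=u$, with $\Delta x>0$. Let $\{u_i\}$ be a sequence at which the right-hand side vanishes for every index $i$ involved (an equilibrium). Then: - (i) there is no index $i$ with $\bar u_{i-1/2}<0$ and $\bar u_{i+1/2}>0$; - (ii) there is no index $i$ with $\bar u_{i-3/2}<0$, $\bar u_{i-1/2}=0$ and $\bar u_{i+1/2}>0$.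
   Context: The unknowns $u_i$ are real numbers indexed by the cells of a uniform mesh with spacing $\Delta x$. An equilibrium of the scheme is a sequence $\{u_i\}$ with $F_{i-1/2}-F_{i+1/2}+\Delta x\,\bar u_{i-1/2}=0$ for all $i$. *)

theory Defs
  imports Complex_Main
begin

text \<open>Cells are indexed by integers; u :: int => real. ubar u i stands for
  the interface average at i+1/2, and flux u i for F at i+1/2.\<close>

definition ubar :: "(int \<Rightarrow> real) \<Rightarrow> int \<Rightarrow> real" where
  "ubar u i = (u i + u (i + 1)) / 2"

definition flux :: "(int \<Rightarrow> real) \<Rightarrow> int \<Rightarrow> real" where
  "flux u i = (if ubar u i > 0 then (u i)^2 / 2
               else if ubar u i = 0 then 0
               else (u (i + 1))^2 / 2)"

definition equilibrium :: "real \<Rightarrow> (int \<Rightarrow> real) \<Rightarrow> bool" where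
  "equilibrium dx u \<longleftrightarrow>
     (\<forall>i. flux u (i - 1) - flux u i + dx * ubar u (i - 1) = 0)"

end

theory Submission
  imports Defs
begin

theorem mainTheorem4:
  fixes dx :: real and u :: "int \<Rightarrow> real"
  assumes "dx > 0" and "equilibrium dx u"
  shows "(\<not> (\<exists>i. ubar u (i - 1) < 0 \<and> ubar u i > 0)) \<and>
    (\<not> (\<exists>i. ubar u (i - 2) < 0 \<and> ubar u (i - 1) = 0 \<and> ubar u i > 0))"
proof
  have E: "\<And>i. flux u (i - 1) - flux u i + dx * ubar u (i - 1) = 0"
    using assms(2) unfolding equilibrium_def by blast
  show "\<not> (\<exists>i. ubar u (i - 1) < 0 \<and> ubar u i > 0)"
  proof
    assume "\<exists>i. ubar u (i - 1) < 0 \<and> ubar u i > 0"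
    then obtain i where a: "ubar u (i - 1) < 0" "ubar u i > 0" by blast
    have "flux u (i - 1) = (u i)^2/2" using a unfolding flux_def by simp
    moreover have "flux u i = (u i)^2/2" using a unfolding flux_def by simp
    ultimately have "dx * ubar u (i - 1) = 0" using E[of i] by linarith
    with a assms(1) show False by simp
  qed
  show "\<not> (\<exists>i. ubar u (i - 2) < 0 \<and> ubar u (i - 1) = 0 \<and> ubar u i > 0)"
  proof
    assume "\<exists>i. ubar u (i - 2) < 0 \<and> ubar u (i - 1) = 0 \<and> ubar u i > 0"
    then obtain i where a: "ubar u (i - 2) < 0" "ubar u (i - 1) = 0" "ubar u i > 0" by blast
    have "flux u (i - 1) = 0" using a unfolding flux_def by simp
    moreover have "flux u i = (u i)^2/2" using a unfolding flux_def by simp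
    ultimately have "u i = 0" using E[of i] a(2) by simp
    with a(2) have u1: "u (i - 1) = 0" unfolding ubar_def by simp
    have "flux u (i - 2) = (u (i - 1))^2/2" using a unfolding flux_def
      by (simp add: algebra_simps)
    with u1 have "flux u (i - 2) = 0" by simp
    moreover have "flux u (i - 1 - 1) - flux u (i - 1) + dx * ubar u (i - 1 - 1) = 0" by (rule E)
    ultimately have "dx * ubar u (i - 2) = 0" using \<open>flux u (i - 1) = 0\<close> by simp
    with a assms(1) show False by simp
  qed
qed

end
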